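(* Let $\Sigma\subset\mathbb S_d^+$ be bounded, closed and convex and $\mathbf W=(W_1,\dots,W_d)\sim\hat N(\mathbf0,\Sigma)$. For $A\in\Sigma$ write $A_{ij}$ for its $(i,j)$ entry and set $\underline\Sigma_{ij}=\min_{A\in\Sigma}A_{ij}$, $\overline\Sigma_{ij}=\max_{A\in\Sigma}A_{ij}$. Then for all $i,j\in\{1,\dots,d\}$, $$\hat{\mathbb E}[W_iW_j]=\overline\Sigma_{ij},\qquad -\hat{\mathbb E}[-W_iW_j]=\underline\Sigma_{ij};$$ in particular $\hat{\mathbb E}[W_i^2]=\overline\Sigma_{ii}$ and $-\hat{\mathbb E}[-W_i^2]=\underline\Sigma_{ii}$.
   Context: Sublinear expectation space $(\Omega,\mathcal H,\hat{\mathbb E})$, $\hat{\mathbb E}[X]=\sup_{Q\in\mathcal P}E_Q[X]$. $C_{b,Lip}$: bounded Lipschitz; $C_{l.Lip}(\mathbb R^m)$: $|\varphi(x)-\varphi(y)|\le C(1+|x|^k+|y|^k)|x-y|$. $X\dashrightarrow Y$ means $\hat{\mathbb E}[\varphi(X,Y)]=\hat{\mathbb E}[\hat{\mathbb E}[\varphi(x,Y)]_{x=X}]$ for all $\varphi\in C_{b,Lip}$. $\mathbb S_d^+$: symmetric positive semidefinite $d\times d$ matrices; $\Sigma^{1/2}=\{A^{1/2}:A\in\Sigma\}$ (symmetric square roots). Multivariate semi-$G$-normal $\mathbf W\sim\hat N(\mathbf0,\Sigma)$: $\mathbf W=\mathbf V\boldsymbol\epsilon$, where $\mathbf V$ is a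 random $d\times d$ matrix with $\hat{\mathbb E}[\varphi(\mathbf V)]=\max_{B\in\Sigma^{1/2}}\varphi(B)$ for all $\varphi\in C_{l.Lip}(\mathbb R^{d\times d})$, $\boldsymbol\epsilon$ is a $d$-vector with $\hat{\mathbb E}[\varphi(\boldsymbol\epsilon)]=E[\varphi(Z)]$ for classical $Z\sim N(\mathbf0,I_d)$, and $\mathbf V\dashrightarrow\boldsymbol\epsilon$. *)

theory Defs
  imports "HOL-Analysis.Analysis" "HOL-Probability.Probability"
begin

definition sublinear_expectation :: "('w \<Rightarrow> real) set \<Rightarrow> (('w \<Rightarrow> real) \<Rightarrow> real) \<Rightarrow> bool" where
  "sublinear_expectation H E \<longleftrightarrow>
     (\<forall>c. (\<lambda>_. c) \<in> H) \<and>
     (\<forall>X\<in>H. \<forall>Y\<in>H. (\<lambda>w. X w + Y w) \<in> H) \<and>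
     (\<forall>X\<in>H. \<forall>a. (\<lambda>w. a * X w) \<in> H) \<and>
     (\<forall>X\<in>H. (\<lambda>w. \<bar>X w\<bar>) \<in> H) \<and>
     (\<forall>X\<in>H. \<forall>Y\<in>H. (\<forall>w. X w \<ge> Y w) \<longrightarrow> E X \<ge> E Y) \<and>
     (\<forall>c. E (\<lambda>_. c) = c) \<and>
     (\<forall>X\<in>H. \<forall>Y\<in>H. E (\<lambda>w. X w + Y w) \<le> E X + E Y) \<and>
     (\<forall>X\<in>H. \<forall>a\<ge>0. E (\<lambda>w. a * X w) = a * E X)"

definition random_vector :: "('w \<Rightarrow> real) set \<Rightarrow> ('w \<Rightarrow> 'a::euclidean_space) \<Rightarrow> bool" where
  "random_vector H X \<longleftrightarrow> (\<forall>b\<in>Basis. (\<lambda>w. X w \<bullet> b) \<in> H)"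

definition C_lLip :: "('a::euclidean_space \<Rightarrow> real) \<Rightarrow> bool" where
  "C_lLip \<phi> \<longleftrightarrow> (\<exists>C k::nat. \<forall>x y.
      \<bar>\<phi> x - \<phi> y\<bar> \<le> C * (1 + norm x ^ k + norm y ^ k) * norm (x - y))"

definition C_bLip :: "('a::euclidean_space \<Rightarrow> real) \<Rightarrow> bool" where
  "C_bLip \<phi> \<longleftrightarrow> (\<exists>M. \<forall>x. \<bar>\<phi> x\<bar> \<le> M) \<and> (\<exists>L. \<forall>x y. \<bar>\<phi> x - \<phi> y\<bar> \<le> L * norm (x - y))"

text \<open>Closure of H under C_lLip transformations of random vectors with values in
the euclidean space 'a (Peng's standing requirement on H, stated per value type).\<close>
definition lLip_closed :: "('w \<Rightarrow> real) set \<Rightarrow> 'a::euclidean_space itself \<Rightarrow> bool" where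
  "lLip_closed H _ \<longleftrightarrow> (\<forall>(X::'w \<Rightarrow> 'a) \<phi>. random_vector H X \<and> C_lLip \<phi> \<longrightarrow> (\<lambda>w. \<phi> (X w)) \<in> H)"

text \<open>Y is independent of X (written X \<dashrightarrow> Y in the paper).\<close>
definition indep_seq :: "(('w \<Rightarrow> real) \<Rightarrow> real) \<Rightarrow> ('w \<Rightarrow> 'a::euclidean_space) \<Rightarrow> ('w \<Rightarrow> 'b::euclidean_space) \<Rightarrow> bool" where
  "indep_seq E X Y \<longleftrightarrow> (\<forall>\<phi>::'a \<times> 'b \<Rightarrow> real. C_bLip \<phi> \<longrightarrow>
      E (\<lambda>w. \<phi> (X w, Y w)) = E (\<lambda>w. (\<lambda>x. E (\<lambda>w'. \<phi> (x, Y w'))) (X w)))"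

definition psd :: "real^'d^'d \<Rightarrow> bool" where
  "psd A \<longleftrightarrow> transpose A = A \<and> (\<forall>x. 0 \<le> x \<bullet> (A *v x))"

definition sqrt_set :: "(real^'d^'d) set \<Rightarrow> (real^'d^'d) set" where
  "sqrt_set \<Sigma> = {B. psd B \<and> B ** B \<in> \<Sigma>}"

definition std_normal_density :: "real^'d \<Rightarrow> real" where
  "std_normal_density x = (2 * pi) powr (- real CARD('d) / 2) * exp (- (norm x)\<^sup>2 / 2)"

end

theory Submission
  imports Defs
begin

lemma lborel_prod_integral:
  fixes h :: "'a::euclidean_space \<Rightarrow> real \<Rightarrow> real"
  assumes int: "\<And>b. b \<in> Basis \<Longrightarrow> integrable lborel (h b)"
  shows "integrable lborel (\<lambda>x::'a. \<Prod>b\<in>Basis. h b (x \<bullet> b))"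
    and "(LINT x|lborel. (\<Prod>b\<in>Basis. h b (x \<bullet> b))) = (\<Prod>b\<in>Basis. LINT t|lborel. h b t)"
proof -
  interpret product_sigma_finite "\<lambda>_::'a. lborel :: real measure" by standard
  have hm[measurable]: "h b \<in> borel_measurable borel" if "b \<in> Basis" for b
    using borel_measurable_integrable[OF int[OF that]] by simp
  have gm[measurable]: "(\<lambda>f. \<Sum>b\<in>Basis. f b *\<^sub>R b) \<in> measurable (\<Pi>\<^sub>M b\<in>Basis. (lborel::real measure)) (borel :: 'a measure)"
    by measurable
  have Fm[measurable]: "(\<lambda>x::'a. \<Prod>b\<in>Basis. h b (x \<bullet> b)) \<in> borel_measurable borel"
    by measurable
  have eq: "(\<Prod>b\<in>Basis. h b ((\<Sum>b'\<in>Basis. f b' *\<^sub>R b') \<bullet> b)) = (\<Prod>b\<in>Basis. h b (f b))" for f :: "'a \<Rightarrow> real"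
    by (intro prod.cong refl) (simp add: inner_sum_left inner_Basis if_distrib cong: if_cong)
  have pint: "integrable (\<Pi>\<^sub>M b\<in>Basis. lborel) (\<lambda>f. \<Prod>b\<in>Basis. h b (f b))"
    by (rule product_integrable_prod) (auto intro: int)
  show "integrable lborel (\<lambda>x::'a. \<Prod>b\<in>Basis. h b (x \<bullet> b))"
    apply (subst lborel_eq)
    apply (subst integrable_distr_eq[OF gm Fm])
    using pint by (simp add: eq)
  show "(LINT x|lborel. (\<Prod>b\<in>Basis. h b (x \<bullet> b))) = (\<Prod>b\<in>Basis. LINT t|lborel. h b t)"
    apply (subst lborel_eq)
    apply (subst integral_distr[OF gm Fm])
    apply (simp add: eq)
    by (rule product_integral_prod) (auto intro: int)
qed

lemma dens_prod:
  fixes x :: "real^'d"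
  shows "Defs.std_normal_density x = (\<Prod>b\<in>Basis. normal_density 0 1 (x \<bullet> b))"
proof -
  have n2: "(norm x)\<^sup>2 = (\<Sum>b\<in>Basis. (x \<bullet> b)\<^sup>2)"
  proof -
    have "(norm x)\<^sup>2 = x \<bullet> x" by (rule power2_norm_eq_inner)
    also have "\<dots> = (\<Sum>b\<in>Basis. (x \<bullet> b) * (x \<bullet> b))" by (rule euclidean_inner)
    finally show ?thesis by (simp add: power2_eq_square)
  qed
  have cB: "card (Basis :: (real^'d) set) = CARD('d)" by simp
  have "(2 * pi) powr (- real CARD('d) / 2) = ((2*pi) powr (-1/2)) powr (real CARD('d))"
    by (simp add: powr_powr)
  also have "\<dots> = ((2*pi) powr (-1/2)) ^ CARD('d)"
    by (rule powr_realpow) simp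
  also have "(2*pi) powr (-1/2) = 1 / sqrt (2*pi)"
  proof -
    have "(2*pi) powr (-(1/2)) = 1 / ((2*pi) powr (1/2))"
      by (rule powr_minus_divide)
    moreover have "(2*pi) powr (1/2) = sqrt (2*pi)"
      by (rule powr_half_sqrt) simp
    ultimately show ?thesis by simp
  qed
  finally have c: "(2 * pi) powr (- real CARD('d) / 2) = (\<Prod>b\<in>(Basis::(real^'d) set). 1 / sqrt (2*pi))"
    using cB by simp
  have e: "exp (- (norm x)\<^sup>2 / 2) = (\<Prod>b\<in>(Basis::(real^'d) set). exp (- (x \<bullet> b)\<^sup>2 / 2))"
    by (simp add: n2 exp_sum[symmetric] sum_negf sum_divide_distrib)
  show ?thesis
    unfolding Defs.std_normal_density_def c e normal_density_def prod.distrib[symmetric]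
    by simp
qed

lemma gauss_moment2:
  fixes k l :: "'d::finite"
  shows "integrable lborel (\<lambda>x::real^'d. x$k * x$l * Defs.std_normal_density x)"
    and "(LINT x|lborel. (x::real^'d)$k * x$l * Defs.std_normal_density x) = (if k = l then 1 else 0)"
proof -
  define h where "h b t = (if b = axis k 1 then t else 1) * (if b = axis l (1::real) then t else 1) * normal_density 0 1 t" for b :: "real^'d" and t :: real
  have kB: "axis k 1 \<in> (Basis :: (real^'d) set)" "axis l 1 \<in> (Basis :: (real^'d) set)"
    by (auto simp: Basis_vec_def)
  have eq: "x$k * x$l * Defs.std_normal_density x = (\<Prod>b\<in>Basis. h b (x \<bullet> b))" for x :: "real^'d"
    unfolding dens_prod h_def prod.distrib
    using kB by (simp add: prod.delta' inner_axis)
  have hc: "h b = (if b = axis k 1 \<and> b = axis l 1 then (\<lambda>t. normal_density 0 1 t * t^(2*1))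
      else if b = axis k 1 \<or> b = axis l 1 then (\<lambda>t. normal_density 0 1 t * t^(2*0+1))
      else (\<lambda>t. normal_density 0 1 t * t^0))" for b
    by (simp add: h_def fun_eq_iff power2_eq_square)
  have int: "integrable lborel (h b)" if "b \<in> Basis" for b
    unfolding hc by (simp only: integrable_std_normal_moment if_True if_False split: if_split) simp
  have ints: "(LINT t|lborel. h b t) = (if b = axis k 1 \<and> b = axis l 1 then 1 else if b = axis k 1 \<or> b = axis l 1 then 0 else 1)" for b
  proof -
    have m2: "(LINT t|lborel. normal_density 0 1 t * t^(2*1)) = 1"
      by (subst integral_std_normal_moment_even) simp
    have m1: "(LINT t|lborel. normal_density 0 1 t * t^(2*0+1)) = 0"
      by (rule integral_std_normal_moment_odd)
    have m0: "(LINT t|lborel. normal_density 0 1 t * t^0) = 1"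
      by simp
    show ?thesis unfolding hc using m0 m1 m2 by (simp split: if_split)
  qed
  show "integrable lborel (\<lambda>x::real^'d. x$k * x$l * Defs.std_normal_density x)"
    unfolding eq by (rule lborel_prod_integral(1)) (rule int)
  have "(LINT x|lborel. (x::real^'d)$k * x$l * Defs.std_normal_density x) = (\<Prod>b\<in>Basis. LINT t|lborel. h b t)"
    unfolding eq by (rule lborel_prod_integral(2)) (rule int)
  also have "\<dots> = (if k = l then 1 else 0)"
  proof (cases "k = l")
    case True
    then show ?thesis unfolding ints True by (simp only: if_True simp_thms) (intro prod.neutral ballI, auto)
  next
    case False
    then have ne: "axis k (1::real) \<noteq> axis l 1" by (simp add: axis_eq_axis)
    have "(\<Prod>b\<in>(Basis::(real^'d) set). (if b = axis k 1 \<and> b = axis l 1 then 1 else if b = axis k 1 \<or> b = axis l 1 then 0 else 1)) = (0::real)"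
      by (rule prod_zero) (use kB ne in auto)
    then show ?thesis unfolding ints using False by simp
  qed
  finally show "(LINT x|lborel. (x::real^'d)$k * x$l * Defs.std_normal_density x) = (if k = l then 1 else 0)" .
qed

lemma quad_nonpos_imp_zero:
  fixes a c :: real
  assumes "\<And>t. 2*t*c + t\<^sup>2*a \<le> 0"
  shows "c = 0"
proof (rule ccontr)
  assume c: "c \<noteq> 0"
  define t where "t = c / (\<bar>a\<bar> + 1)"
  have pos: "\<bar>a\<bar> + 1 > 0" by simp
  have "2*t*c + t\<^sup>2*a \<le> 0" by (rule assms)
  hence "(\<bar>a\<bar> + 1)\<^sup>2 * (2*t*c + t\<^sup>2*a) \<le> 0"
    by (simp add: mult_nonneg_nonpos)
  moreover have "(\<bar>a\<bar> + 1)\<^sup>2 * (2*t*c + t\<^sup>2*a) = c\<^sup>2 * (2*(\<bar>a\<bar>+1) + a)"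
  proof -
    have tD: "t * (\<bar>a\<bar> + 1) = c" unfolding t_def using pos by simp
    have "(\<bar>a\<bar> + 1)\<^sup>2 * (2*t*c + t\<^sup>2*a) = 2*(t*(\<bar>a\<bar> + 1))*c*(\<bar>a\<bar> + 1) + (t*(\<bar>a\<bar> + 1))\<^sup>2*a"
      by (simp add: power2_eq_square algebra_simps)
    also have "\<dots> = c\<^sup>2 * (2*(\<bar>a\<bar>+1) + a)" unfolding tD by (simp add: power2_eq_square algebra_simps)
    finally show ?thesis .
  qed
  moreover have "c\<^sup>2 * (2*(\<bar>a\<bar>+1) + a) > 0"
    using c by (intro mult_pos_pos) (auto simp: abs_if)
  ultimately show False by linarith
qed

lemma spectral_aux:
  fixes f :: "'a::euclidean_space \<Rightarrow> 'a"
  assumes lin: "linear f" and sa: "\<And>x y. f x \<bullet> y = x \<bullet> f y"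
  shows "subspace S \<Longrightarrow> f ` S \<subseteq> S \<Longrightarrow> \<exists>U. finite U \<and> U \<subseteq> S \<and> span U = S \<and>
     (\<forall>u\<in>U. norm u = 1 \<and> (\<exists>c. f u = c *\<^sub>R u)) \<and> (\<forall>u\<in>U. \<forall>v\<in>U. u \<noteq> v \<longrightarrow> u \<bullet> v = 0)"
proof (induction "dim S" arbitrary: S rule: less_induct)
  case less
  note sub = less.prems(1) and inv = less.prems(2)
  show ?case
  proof (cases "S = {0}")
    case True then show ?thesis by (intro exI[of _ "{}"]) auto
  next
    case False
    then obtain z where z: "z \<in> S" "z \<noteq> 0" using sub subspace_0 by blast
    define K where "K = S \<inter> sphere 0 1"
    have Kc: "compact K" unfolding K_def
      using closed_subspace[OF sub] by (intro closed_Int_compact) auto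
    have "z /\<^sub>R norm z \<in> K" unfolding K_def using z sub
      by (auto simp: subspace_scale)
    hence Kne: "K \<noteq> {}" by auto
    have fc: "continuous_on UNIV f"
      using lin by (simp add: linear_continuous_on linear_conv_bounded_linear)
    have cont: "continuous_on K (\<lambda>x. x \<bullet> f x)"
      by (intro continuous_intros continuous_on_subset[OF fc]) auto
    obtain u where uK: "u \<in> K" and umax: "\<And>y. y \<in> K \<Longrightarrow> y \<bullet> f y \<le> u \<bullet> f u"
      using continuous_attains_sup[OF Kc Kne cont] by blast
    have uS: "u \<in> S" and nu: "norm u = 1" using uK by (auto simp: K_def)
    have uu: "u \<bullet> u = 1" using nu by (simp add: dot_square_norm)
    have qexp: "(u + t *\<^sub>R v) \<bullet> f (u + t *\<^sub>R v) = u \<bullet> f u + 2 * t * (v \<bullet> f u) + t\<^sup>2 * (v \<bullet> f v)" for t v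
    proof -
      have "u \<bullet> f v = v \<bullet> f u" using sa[of v u] by (simp add: inner_commute)
      then show ?thesis
        by (simp add: linear_add[OF lin] linear_scale[OF lin] inner_add_left inner_add_right
            power2_eq_square algebra_simps)
    qed
    have perp: "v \<bullet> f u = 0" if vS: "v \<in> S" and vu: "v \<bullet> u = 0" for v
    proof (rule quad_nonpos_imp_zero)
      fix t :: real
      have n2: "(norm (u + t *\<^sub>R v))\<^sup>2 = 1 + t\<^sup>2 * (v \<bullet> v)"
      proof -
        have "(norm (u + t *\<^sub>R v))\<^sup>2 = (u + t *\<^sub>R v) \<bullet> (u + t *\<^sub>R v)" by (rule power2_norm_eq_inner)
        also have "\<dots> = u \<bullet> u + 2 * t * (v \<bullet> u) + t\<^sup>2 * (v \<bullet> v)"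
          by (simp add: inner_add_left inner_add_right inner_commute power2_eq_square algebra_simps)
        finally show ?thesis using vu uu by simp
      qed
      have npos: "norm (u + t *\<^sub>R v) > 0"
      proof -
        have "0 \<le> t\<^sup>2 * (v \<bullet> v)" by simp
        hence "(norm (u + t *\<^sub>R v))\<^sup>2 > 0" using n2 by linarith
        thus ?thesis by simp
      qed
      define N where "N = norm (u + t *\<^sub>R v)"
      have yK: "(u + t *\<^sub>R v) /\<^sub>R N \<in> K"
        unfolding K_def N_def using npos sub uS vS
        by (auto simp: subspace_scale subspace_add)
      have "((u + t *\<^sub>R v) /\<^sub>R N) \<bullet> f ((u + t *\<^sub>R v) /\<^sub>R N) = ((u + t *\<^sub>R v) \<bullet> f (u + t *\<^sub>R v)) / N\<^sup>2"
        by (simp add: linear_scale[OF lin] power2_eq_square divide_inverse mult_ac)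
      with umax[OF yK] have "((u + t *\<^sub>R v) \<bullet> f (u + t *\<^sub>R v)) / N\<^sup>2 \<le> u \<bullet> f u" by simp
      hence "(u + t *\<^sub>R v) \<bullet> f (u + t *\<^sub>R v) \<le> (u \<bullet> f u) * N\<^sup>2"
        using npos unfolding N_def by (simp add: divide_le_eq)
      hence "u \<bullet> f u + 2 * t * (v \<bullet> f u) + t\<^sup>2 * (v \<bullet> f v) \<le> (u \<bullet> f u) * (1 + t\<^sup>2 * (v \<bullet> v))"
        using n2 unfolding N_def qexp by simp
      then show "2 * t * (v \<bullet> f u) + t\<^sup>2 * (v \<bullet> f v - (u \<bullet> f u) * (v \<bullet> v)) \<le> 0"
        by (simp add: algebra_simps)
    qed
    define lam where "lam = u \<bullet> f u"
    define w where "w = f u - lam *\<^sub>R u"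
    have wS: "w \<in> S" unfolding w_def using inv uS sub by (auto simp: subspace_diff subspace_scale)
    have wu: "w \<bullet> u = 0" unfolding w_def lam_def using uu by (simp add: inner_diff_left inner_diff_right inner_commute)
    have "w \<bullet> w = w \<bullet> f u - lam * (w \<bullet> u)" unfolding w_def by (simp add: inner_diff_right)
    also have "\<dots> = 0" using perp[OF wS wu] wu by simp
    finally have "w = 0" by simp
    hence eig: "f u = lam *\<^sub>R u" unfolding w_def by simp
    define S' where "S' = {x \<in> S. x \<bullet> u = 0}"
    have sub': "subspace S'" unfolding S'_def subspace_def using sub
      by (auto simp: subspace_0 subspace_add subspace_scale inner_add_left)
    have inv': "f ` S' \<subseteq> S'"
    proof
      fix y assume "y \<in> f ` S'"
      then obtain x where x: "x \<in> S'" "y = f x" by auto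
      have "f x \<bullet> u = x \<bullet> f u" by (rule sa)
      also have "\<dots> = 0" using x(1) eig by (simp add: S'_def)
      finally show "y \<in> S'" using x inv by (auto simp: S'_def)
    qed
    have S'S: "S' \<subseteq> S" by (auto simp: S'_def)
    have "u \<notin> S'" using uu by (simp add: S'_def)
    hence "span S' \<subset> span S"
      using S'S uS by (auto simp: span_eq_iff[THEN iffD2, OF sub] span_eq_iff[THEN iffD2, OF sub'])
    hence "dim S' < dim S" by (rule dim_psubset)
    from less.hyps[OF this sub' inv'] obtain U' where U': "finite U'" "U' \<subseteq> S'" "span U' = S'"
      "\<forall>u\<in>U'. norm u = 1 \<and> (\<exists>c. f u = c *\<^sub>R u)" "\<forall>u\<in>U'. \<forall>v\<in>U'. u \<noteq> v \<longrightarrow> u \<bullet> v = 0"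
      by blast
    show ?thesis
    proof (intro exI[of _ "insert u U'"] conjI)
      show "finite (insert u U')" using U' by simp
      show "insert u U' \<subseteq> S" using U' S'S uS by auto
      show "\<forall>v\<in>insert u U'. norm v = 1 \<and> (\<exists>c. f v = c *\<^sub>R v)" using U' nu eig by auto
      show "\<forall>a\<in>insert u U'. \<forall>b\<in>insert u U'. a \<noteq> b \<longrightarrow> a \<bullet> b = 0"
        using U'(2,5) by (auto simp: S'_def inner_commute)
      show "span (insert u U') = S"
      proof
        show "span (insert u U') \<subseteq> S"
          using U' S'S uS sub by (intro span_minimal) auto
        show "S \<subseteq> span (insert u U')"
        proof
          fix x assume xS: "x \<in> S"
          have "x - (x \<bullet> u) *\<^sub>R u \<in> S'"
            using xS uS sub uu by (auto simp: S'_def subspace_diff subspace_scale inner_diff_left)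
          hence "x - (x \<bullet> u) *\<^sub>R u \<in> span (insert u U')"
            using U'(3) span_mono[of U' "insert u U'"] by auto
          moreover have "(x \<bullet> u) *\<^sub>R u \<in> span (insert u U')"
            by (intro span_scale span_base) simp
          ultimately have "(x - (x \<bullet> u) *\<^sub>R u) + (x \<bullet> u) *\<^sub>R u \<in> span (insert u U')"
            by (rule span_add)
          thus "x \<in> span (insert u U')" by simp
        qed
      qed
    qed
  qed
qed

lemma orth_coeff:
  fixes U :: "'a::real_inner set"
  assumes "finite U" "\<forall>u\<in>U. norm u = 1" "\<forall>u\<in>U. \<forall>v\<in>U. u \<noteq> v \<longrightarrow> u \<bullet> v = 0" "v \<in> U"
  shows "v \<bullet> (\<Sum>u\<in>U. c u *\<^sub>R u) = c v"
proof -
  have "v \<bullet> (\<Sum>u\<in>U. c u *\<^sub>R u) = (\<Sum>u\<in>U. c u * (v \<bullet> u))"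
    by (simp add: inner_sum_right)
  also have "\<dots> = (\<Sum>u\<in>U. if u = v then c v else 0)"
    using assms by (intro sum.cong refl) (auto simp: dot_square_norm)
  also have "\<dots> = c v" using assms by simp
  finally show ?thesis .
qed

lemma psd_sqrt_exists:
  fixes A :: "real^'d^'d"
  assumes "psd A"
  shows "\<exists>B. psd B \<and> B ** B = A"
proof -
  have symA: "transpose A = A" and posA: "\<And>x. 0 \<le> x \<bullet> (A *v x)" using assms by (auto simp: psd_def)
  have sa: "(A *v x) \<bullet> y = x \<bullet> (A *v y)" for x y
  proof -
    have "(A *v x) \<bullet> y = (x v* transpose A) \<bullet> y" by simp
    also have "\<dots> = x \<bullet> (A *v y)" unfolding symA by (rule dot_lmul_matrix)
    finally show ?thesis .
  qed
  have ex: "\<exists>U. finite U \<and> U \<subseteq> UNIV \<and> span U = UNIV \<and> (\<forall>u\<in>U. norm u = 1 \<and> (\<exists>c. A *v u = c *\<^sub>R u))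
      \<and> (\<forall>u\<in>U. \<forall>v\<in>U. u \<noteq> v \<longrightarrow> u \<bullet> v = 0)"
    by (rule spectral_aux[of "\<lambda>x. A *v x", OF matrix_vector_mul_linear sa]) simp_all
  then obtain U where U: "finite U" "span U = UNIV" "\<forall>u\<in>U. norm u = 1 \<and> (\<exists>c. A *v u = c *\<^sub>R u)"
      "\<forall>u\<in>U. \<forall>v\<in>U. u \<noteq> v \<longrightarrow> u \<bullet> v = 0"
    by blast
  define lam where "lam u = u \<bullet> (A *v u)" for u
  have eig: "A *v u = lam u *\<^sub>R u" if "u \<in> U" for u
  proof -
    have "\<exists>c. A *v u = c *\<^sub>R u" using U(3) that by simp
    then obtain c where c: "A *v u = c *\<^sub>R u" by (elim exE)
    have "u \<bullet> u = 1" using U(3) that by (simp add: dot_square_norm)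
    hence lc: "lam u = c" unfolding lam_def c by simp
    show ?thesis unfolding lc by (rule c)
  qed
  have lam0: "lam u \<ge> 0" for u unfolding lam_def by (rule posA)
  define s where "s u = sqrt (lam u)" for u
  define B :: "real^'d^'d" where "B = (\<chi> i j. \<Sum>u\<in>U. s u * u$i * u$j)"
  have Bv: "B *v x = (\<Sum>u\<in>U. (s u * (u \<bullet> x)) *\<^sub>R u)" for x
  proof -
    have "(B *v x) $ i = (\<Sum>u\<in>U. (s u * (u \<bullet> x)) *\<^sub>R u) $ i" for i
    proof -
      have "(B *v x) $ i = (\<Sum>j\<in>UNIV. (\<Sum>u\<in>U. s u * u$i * u$j) * x$j)"
        by (simp add: B_def matrix_vector_mult_def)
      also have "\<dots> = (\<Sum>u\<in>U. \<Sum>j\<in>UNIV. s u * u$i * (u$j * x$j))"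
        unfolding sum_distrib_right by (subst sum.swap) (simp add: mult.assoc)
      also have "\<dots> = (\<Sum>u\<in>U. s u * u$i * (u \<bullet> x))"
        by (simp add: inner_vec_def sum_distrib_left)
      also have "\<dots> = (\<Sum>u\<in>U. (s u * (u \<bullet> x)) *\<^sub>R u) $ i"
        by (simp add: sum_component mult_ac)
      finally show ?thesis .
    qed
    thus ?thesis by (simp add: vec_eq_iff)
  qed
  have expand: "x = (\<Sum>u\<in>U. (u \<bullet> x) *\<^sub>R u)" for x
  proof -
    have "x \<in> span U" using U(2) by simp
    then obtain c where c: "x = (\<Sum>u\<in>U. c u *\<^sub>R u)"
      using span_finite[OF U(1)] by auto
    have "u \<bullet> x = c u" if "u \<in> U" for u
      unfolding c using orth_coeff[OF U(1) _ U(4) that] U(3) by auto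
    hence "(\<Sum>u\<in>U. (u \<bullet> x) *\<^sub>R u) = (\<Sum>u\<in>U. c u *\<^sub>R u)" by simp
    thus ?thesis using c by simp
  qed
  have Ax: "A *v x = (\<Sum>u\<in>U. (lam u * (u \<bullet> x)) *\<^sub>R u)" for x
  proof -
    have "A *v x = A *v (\<Sum>u\<in>U. (u \<bullet> x) *\<^sub>R u)" by (rule arg_cong[where f="\<lambda>y. A *v y", OF expand])
    also have "\<dots> = (\<Sum>u\<in>U. (u \<bullet> x) *\<^sub>R (A *v u))"
      by (simp add: linear_sum[OF matrix_vector_mul_linear] matrix_vector_mult_scaleR)
    also have "\<dots> = (\<Sum>u\<in>U. (lam u * (u \<bullet> x)) *\<^sub>R u)"
      by (intro sum.cong refl) (simp add: eig mult_ac)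
    finally show ?thesis .
  qed
  have BBx: "B *v (B *v x) = A *v x" for x
  proof -
    have "v \<bullet> (B *v x) = s v * (v \<bullet> x)" if "v \<in> U" for v
      unfolding Bv using orth_coeff[OF U(1) _ U(4) that] U(3) by auto
    hence "B *v (B *v x) = (\<Sum>u\<in>U. (s u * (s u * (u \<bullet> x))) *\<^sub>R u)"
      unfolding Bv[of "B *v x"] by (intro sum.cong refl) simp
    also have "\<dots> = (\<Sum>u\<in>U. (lam u * (u \<bullet> x)) *\<^sub>R u)"
      by (intro sum.cong refl) (simp add: s_def lam0 mult.assoc[symmetric])
    finally show ?thesis using Ax by simp
  qed
  have "B ** B = A"
    by (rule matrix_eq[THEN iffD2]) (simp add: matrix_vector_mul_assoc[symmetric] BBx)
  moreover have "transpose B = B"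
    by (simp add: B_def transpose_def vec_eq_iff mult_ac)
  moreover have "0 \<le> x \<bullet> (B *v x)" for x
  proof -
    have "x \<bullet> (B *v x) = (\<Sum>u\<in>U. s u * (u \<bullet> x)\<^sup>2)"
      unfolding Bv by (simp add: inner_sum_right inner_commute power2_eq_square mult_ac)
    also have "\<dots> \<ge> 0" by (intro sum_nonneg) (simp add: s_def lam0)
    finally show ?thesis .
  qed
  ultimately show ?thesis by (auto simp: psd_def)
qed

lemma lLip_absC:
  assumes "C_lLip (f :: 'a::euclidean_space \<Rightarrow> real)"
  shows "\<exists>C k::nat. C \<ge> 0 \<and> (\<forall>x y. \<bar>f x - f y\<bar> \<le> C * (1 + norm x ^ k + norm y ^ k) * norm (x - y))"
proof -
  obtain C and k :: nat where H: "\<forall>x y. \<bar>f x - f y\<bar> \<le> C * (1 + norm x ^ k + norm y ^ k) * norm (x - y)"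
    using assms unfolding C_lLip_def by blast
  have "\<bar>f x - f y\<bar> \<le> \<bar>C\<bar> * (1 + norm x ^ k + norm y ^ k) * norm (x - y)" for x y
  proof -
    have "C * (1 + norm x ^ k + norm y ^ k) * norm (x - y) \<le> \<bar>C\<bar> * (1 + norm x ^ k + norm y ^ k) * norm (x - y)"
      by (intro mult_right_mono) auto
    thus ?thesis using H by (meson order_trans)
  qed
  thus ?thesis by (intro exI[of _ "\<bar>C\<bar>"] exI[of _ k]) auto
qed

lemma lLipI:
  assumes "C \<ge> 0" "\<And>x y. \<bar>f x - f y\<bar> \<le> C * (1 + norm x ^ k + norm y ^ k) * norm (x - y)"
  shows "C_lLip (f :: 'a::euclidean_space \<Rightarrow> real)"
  unfolding C_lLip_def using assms by blast

lemma bLip_lLip: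
  assumes "C_bLip (f :: 'a::euclidean_space \<Rightarrow> real)"
  shows "C_lLip f"
proof -
  obtain L where L: "\<And>x y. \<bar>f x - f y\<bar> \<le> L * norm (x - y)" using assms unfolding C_bLip_def by blast
  show ?thesis
  proof (rule lLipI[of "\<bar>L\<bar>" _ 0])
    fix x y :: 'a
    have "L * norm (x - y) \<le> \<bar>L\<bar> * (1 + norm x ^ 0 + norm y ^ 0) * norm (x - y)"
    proof -
      have "L \<le> \<bar>L\<bar> * (1 + norm x ^ 0 + norm y ^ 0)" by simp
      thus ?thesis by (rule mult_right_mono) simp
    qed
    thus "\<bar>f x - f y\<bar> \<le> \<bar>L\<bar> * (1 + norm x ^ 0 + norm y ^ 0) * norm (x - y)"
      using L[of x y] by linarith
  qed simp
qed

lemma lLip_neg: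
  assumes "C_lLip (f :: 'a::euclidean_space \<Rightarrow> real)"
  shows "C_lLip (\<lambda>x. - f x)"
proof -
  obtain C and k :: nat where H: "\<forall>x y. \<bar>f x - f y\<bar> \<le> C * (1 + norm x ^ k + norm y ^ k) * norm (x - y)"
    using assms unfolding C_lLip_def by blast
  have "\<bar>- f x - - f y\<bar> \<le> C * (1 + norm x ^ k + norm y ^ k) * norm (x - y)" for x y
    using H[rule_format, of x y] by (simp add: abs_minus_commute)
  thus ?thesis unfolding C_lLip_def by blast
qed

lemma lLip_scale:
  assumes "C_lLip (f :: 'a::euclidean_space \<Rightarrow> real)"
  shows "C_lLip (\<lambda>x. s * f x)"
proof -
  obtain C and k :: nat where C: "C \<ge> 0" and H: "\<forall>x y. \<bar>f x - f y\<bar> \<le> C * (1 + norm x ^ k + norm y ^ k) * norm (x - y)"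
    using lLip_absC[OF assms] by blast
  show ?thesis
  proof (rule lLipI[of "\<bar>s\<bar> * C" _ k])
    fix x y :: 'a
    have "\<bar>s * f x - s * f y\<bar> = \<bar>s\<bar> * \<bar>f x - f y\<bar>" by (simp add: abs_mult[symmetric] right_diff_distrib)
    also have "\<dots> \<le> \<bar>s\<bar> * (C * (1 + norm x ^ k + norm y ^ k) * norm (x - y))"
      using H by (intro mult_left_mono) auto
    finally show "\<bar>s * f x - s * f y\<bar> \<le> \<bar>s\<bar> * C * (1 + norm x ^ k + norm y ^ k) * norm (x - y)"
      by (simp add: mult.assoc)
  qed (use C in simp)
qed

lemma pow_sum_le:
  fixes a b :: real
  assumes "a \<ge> 0" "b \<ge> 0"
  shows "(a + b) ^ k \<le> 2 ^ k * (a ^ k + b ^ k)"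
proof -
  have "(a + b) ^ k \<le> (2 * max a b) ^ k"
    using assms by (intro power_mono) auto
  also have "\<dots> = 2 ^ k * (max a b) ^ k" by (simp add: power_mult_distrib)
  also have "(max a b) ^ k \<le> a ^ k + b ^ k"
    using assms by (cases "a \<le> b") (auto simp: max_def)
  finally show ?thesis by simp
qed

lemma lLip_slice:
  fixes \<psi> :: "'a::euclidean_space \<times> 'b::euclidean_space \<Rightarrow> real"
  assumes "C_lLip \<psi>"
  shows "C_lLip (\<lambda>x. \<psi> (B, x))"
proof -
  obtain C and k :: nat where C: "C \<ge> 0" and H: "\<And>x y. \<bar>\<psi> x - \<psi> y\<bar> \<le> C * (1 + norm x ^ k + norm y ^ k) * norm (x - y)"
    using lLip_absC[OF assms] by blast
  define D where "D = 1 + 2^(k+1) * norm B ^ k"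
  have D1: "D \<ge> 1" unfolding D_def by simp
  have nb: "norm (B, x) ^ k \<le> 2^k * (norm B ^ k + norm x ^ k)" for x :: 'b
  proof -
    have "norm (B, x) \<le> norm B + norm x" by (simp add: norm_Pair_le)
    hence "norm (B, x) ^ k \<le> (norm B + norm x) ^ k" by (intro power_mono) auto
    also have "\<dots> \<le> 2^k * (norm B ^ k + norm x ^ k)" by (rule pow_sum_le) auto
    finally show ?thesis .
  qed
  show ?thesis
  proof (rule lLipI[of "C * 2^k * D" _ k])
    show "0 \<le> C * 2 ^ k * D" using C D1 by simp
    fix x y :: 'b
    have "\<bar>\<psi> (B, x) - \<psi> (B, y)\<bar> \<le> C * (1 + norm (B, x) ^ k + norm (B, y) ^ k) * norm ((B, x) - (B, y))"
      by (rule H)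
    also have "norm ((B, x) - (B, y)) = norm (x - y)" by (simp add: norm_Pair)
    also have "1 + norm (B, x) ^ k + norm (B, y) ^ k \<le> 2^k * D * (1 + norm x ^ k + norm y ^ k)"
    proof -
      have s: "0 \<le> norm x ^ k + norm y ^ k" by simp
      have "1 + norm (B, x) ^ k + norm (B, y) ^ k \<le> 1 + 2^k * (norm B ^ k + norm x ^ k) + 2^k * (norm B ^ k + norm y ^ k)"
        using nb[of x] nb[of y] by linarith
      also have "\<dots> = D + 2^k * (norm x ^ k + norm y ^ k)" by (simp add: D_def algebra_simps)
      also have "\<dots> \<le> 2^k * D * (1 + (norm x ^ k + norm y ^ k))"
      proof -
        have "(1::real) \<le> 2^k" by simp
        hence "D \<le> 2^k * D" using D1 by simp
        moreover have "2^k * (norm x ^ k + norm y ^ k) \<le> 2^k * D * (norm x ^ k + norm y ^ k)"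
          using D1 s by (simp add: mult_right_mono mult_left_mono)
        ultimately show ?thesis by (simp add: algebra_simps)
      qed
      finally show ?thesis by (simp add: add.assoc)
    qed
    hence "C * (1 + norm (B, x) ^ k + norm (B, y) ^ k) * norm (x - y) \<le> C * (2^k * D * (1 + norm x ^ k + norm y ^ k)) * norm (x - y)"
      using C by (intro mult_right_mono mult_left_mono) auto
    finally show "\<bar>\<psi> (B, x) - \<psi> (B, y)\<bar> \<le> C * 2 ^ k * D * (1 + norm x ^ k + norm y ^ k) * norm (x - y)"
      by (simp add: mult_ac)
  qed
qed

lemma lLip_norm6: "C_lLip (\<lambda>x::'a::euclidean_space. norm x ^ 6)"
proof (rule lLipI[of 6 _ 5])
  fix x y :: 'a
  define a where "a = norm x"
  define b where "b = norm y"
  have a0: "a \<ge> 0" and b0: "b \<ge> 0" by (auto simp: a_def b_def)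
  define M where "M = max a b"
  have M0: "M \<ge> 0" using a0 by (simp add: M_def)
  have aM: "a \<le> M" and bM: "b \<le> M" by (auto simp: M_def)
  have t: "a^p * b^q \<le> M^(p+q)" for p q
    using mult_mono[OF power_mono[OF aM a0, of p] power_mono[OF bM b0, of q]] M0 b0
    by (simp add: power_add)
  have M5: "M^5 \<le> a^5 + b^5" using a0 b0 by (cases "a \<le> b") (auto simp: M_def max_def)
  have fact: "a^6 - b^6 = (a - b) * (a^5 + a^4*b + a^3*b^2 + a^2*b^3 + a*b^4 + b^5)"
    by (simp add: algebra_simps power2_eq_square power3_eq_cube power4_eq_xxxx eval_nat_numeral)
  have S0: "0 \<le> a^5 + a^4*b + a^3*b^2 + a^2*b^3 + a*b^4 + b^5" using a0 b0 by simp
  have S: "a^5 + a^4*b + a^3*b^2 + a^2*b^3 + a*b^4 + b^5 \<le> 6 * M^5"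
    using t[of 5 0] t[of 4 1] t[of 3 2] t[of 2 3] t[of 1 4] t[of 0 5] by simp
  have ab: "\<bar>a - b\<bar> \<le> norm (x - y)" unfolding a_def b_def by (rule norm_triangle_ineq3)
  have "\<bar>a^6 - b^6\<bar> = \<bar>a - b\<bar> * (a^5 + a^4*b + a^3*b^2 + a^2*b^3 + a*b^4 + b^5)"
    unfolding fact abs_mult using S0 by simp
  also have "\<dots> \<le> norm (x - y) * (6 * (1 + a^5 + b^5))"
    using S M5 S0 ab by (intro mult_mono) auto
  finally show "\<bar>norm x ^ 6 - norm y ^ 6\<bar> \<le> 6 * (1 + norm x ^ 5 + norm y ^ 5) * norm (x - y)"
    by (simp add: a_def b_def mult_ac)
qed simp

locale SLE =
  fixes H :: "('w \<Rightarrow> real) set" and E :: "('w \<Rightarrow> real) \<Rightarrow> real"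
  assumes SE: "sublinear_expectation H E"
begin

lemma H_const: "(\<lambda>_. c) \<in> H" using SE unfolding sublinear_expectation_def by blast
lemma H_add: "X \<in> H \<Longrightarrow> Y \<in> H \<Longrightarrow> (\<lambda>w. X w + Y w) \<in> H" using SE unfolding sublinear_expectation_def by blast
lemma H_scale: "X \<in> H \<Longrightarrow> (\<lambda>w. a * X w) \<in> H" using SE unfolding sublinear_expectation_def by blast
lemma H_abs: "X \<in> H \<Longrightarrow> (\<lambda>w. \<bar>X w\<bar>) \<in> H" using SE unfolding sublinear_expectation_def by blast
lemma E_mono: "X \<in> H \<Longrightarrow> Y \<in> H \<Longrightarrow> (\<And>w. X w \<le> Y w) \<Longrightarrow> E X \<le> E Y"
  using SE unfolding sublinear_expectation_def by blast
lemma E_const: "E (\<lambda>_. c) = c" using SE unfolding sublinear_expectation_def by blast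
lemma E_add: "X \<in> H \<Longrightarrow> Y \<in> H \<Longrightarrow> E (\<lambda>w. X w + Y w) \<le> E X + E Y"
  using SE unfolding sublinear_expectation_def by blast
lemma E_scale: "X \<in> H \<Longrightarrow> a \<ge> 0 \<Longrightarrow> E (\<lambda>w. a * X w) = a * E X"
  using SE unfolding sublinear_expectation_def by blast

lemma H_diff: "X \<in> H \<Longrightarrow> Y \<in> H \<Longrightarrow> (\<lambda>w. X w - Y w) \<in> H"
proof -
  assume X: "X \<in> H" and Y: "Y \<in> H"
  have "(\<lambda>w. X w + (-1) * Y w) \<in> H" by (intro H_add H_scale X Y)
  thus ?thesis by simp
qed

lemma E_diff_le: "X \<in> H \<Longrightarrow> Y \<in> H \<Longrightarrow> E X - E Y \<le> E (\<lambda>w. \<bar>X w - Y w\<bar>)"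
proof -
  assume X: "X \<in> H" and Y: "Y \<in> H"
  have D: "(\<lambda>w. X w - Y w) \<in> H" by (rule H_diff[OF X Y])
  have "E X = E (\<lambda>w. Y w + (X w - Y w))" by simp
  also have "\<dots> \<le> E Y + E (\<lambda>w. X w - Y w)" by (rule E_add[OF Y D])
  also have "E (\<lambda>w. X w - Y w) \<le> E (\<lambda>w. \<bar>X w - Y w\<bar>)"
    by (rule E_mono[OF D H_abs[OF D]]) simp
  finally show ?thesis by simp
qed

lemma E_diff_abs: "X \<in> H \<Longrightarrow> Y \<in> H \<Longrightarrow> \<bar>E X - E Y\<bar> \<le> E (\<lambda>w. \<bar>X w - Y w\<bar>)"
proof -
  assume X: "X \<in> H" and Y: "Y \<in> H"
  have "E Y - E X \<le> E (\<lambda>w. \<bar>Y w - X w\<bar>)" by (rule E_diff_le[OF Y X])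
  also have "(\<lambda>w. \<bar>Y w - X w\<bar>) = (\<lambda>w. \<bar>X w - Y w\<bar>)" by (simp add: abs_minus_commute)
  finally show ?thesis using E_diff_le[OF X Y] by linarith
qed

lemma E_lin_le:
  assumes X: "X \<in> H" and a: "a \<ge> 0"
  shows "E (\<lambda>w. a * (c + X w)) \<le> a * (c + E X)"
proof -
  have cX: "(\<lambda>w. c + X w) \<in> H" by (intro H_add H_const X)
  have "E (\<lambda>w. a * (c + X w)) = a * E (\<lambda>w. c + X w)" by (rule E_scale[OF cX a])
  also have "E (\<lambda>w. c + X w) \<le> E (\<lambda>_. c) + E X" by (rule E_add[OF H_const X])
  hence "a * E (\<lambda>w. c + X w) \<le> a * (c + E X)" using a by (simp add: E_const mult_left_mono)
  finally show ?thesis .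
qed

lemma E_lin2_le:
  assumes X: "X \<in> H" and Y: "Y \<in> H" and a: "a \<ge> 0"
  shows "E (\<lambda>w. a * (X w + Y w)) \<le> a * (E X + E Y)"
proof -
  have cX: "(\<lambda>w. X w + Y w) \<in> H" by (intro H_add X Y)
  have "E (\<lambda>w. a * (X w + Y w)) = a * E (\<lambda>w. X w + Y w)" by (rule E_scale[OF cX a])
  also have "E (\<lambda>w. X w + Y w) \<le> E X + E Y" by (rule E_add[OF X Y])
  hence "a * E (\<lambda>w. X w + Y w) \<le> a * (E X + E Y)" using a by (simp add: mult_left_mono)
  finally show ?thesis .
qed

end

lemma small_imp_zero:
  fixes a K :: real
  assumes "\<And>t. t > 0 \<Longrightarrow> \<bar>a\<bar> \<le> K / t"
  shows "a = 0"
proof (rule ccontr)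
  assume a: "a \<noteq> 0"
  have K: "K \<ge> 0" using assms[of 1] by simp
  define t where "t = 2 * (K + 1) / \<bar>a\<bar>"
  have t: "t > 0" using a K by (simp add: t_def)
  have "\<bar>a\<bar> \<le> K / t" by (rule assms[OF t])
  also have "K / t = K * \<bar>a\<bar> / (2 * (K + 1))" using a K by (simp add: t_def)
  also have "\<dots> < \<bar>a\<bar>"
  proof -
    have "K * \<bar>a\<bar> < \<bar>a\<bar> * (2 * (K + 1))" using a K by (simp add: algebra_simps add_nonneg_pos)
    thus ?thesis using K by (simp add: divide_less_eq)
  qed
  finally show False by simp
qed

definition phi :: "'d::finite \<Rightarrow> 'd \<Rightarrow> (real^'d^'d) \<times> (real^'d) \<Rightarrow> real" where
  "phi i j p = (fst p *v snd p) $ i * (fst p *v snd p) $ j"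

definition gfun :: "'d::finite \<Rightarrow> 'd \<Rightarrow> real^'d^'d \<Rightarrow> real" where
  "gfun i j B = (B ** transpose B) $ i $ j"

lemma nfst: "norm (fst p) \<le> norm p"
  by (cases p) (simp add: norm_fst_le)

lemma nsnd: "norm (snd p) \<le> norm p"
  by (cases p) (simp add: norm_snd_le)

lemma mv_nth: "(B *v x) $ i = B $ i \<bullet> (x :: real^'d)"
  by (simp add: matrix_vector_mult_def inner_vec_def)

lemma gfun_inner: "gfun i j B = B $ i \<bullet> B $ j"
  by (simp add: gfun_def matrix_matrix_mult_def transpose_def inner_vec_def)

lemma mv_nth_le: "\<bar>(B *v x) $ i\<bar> \<le> norm B * norm (x :: real^'d)"
proof -
  have "\<bar>(B *v x) $ i\<bar> \<le> norm (B $ i) * norm x" unfolding mv_nth by (rule Cauchy_Schwarz_ineq2)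
  also have "\<dots> \<le> norm B * norm x" by (intro mult_right_mono) (auto intro: Finite_Cartesian_Product.norm_nth_le)
  finally show ?thesis .
qed

lemma mv_nth_lip:
  fixes p q :: "(real^'d^'d) \<times> (real^'d)"
  shows "\<bar>(fst p *v snd p) $ i - (fst q *v snd q) $ i\<bar> \<le> (norm p + norm q) * norm (p - q)"
proof -
  obtain B x where p: "p = (B, x)" by (cases p)
  obtain B' x' where q: "q = (B', x')" by (cases q)
  have "(B *v x) $ i - (B' *v x') $ i = (B - B') $ i \<bullet> x + B' $ i \<bullet> (x - x')"
    by (simp add: mv_nth inner_diff_left inner_diff_right)
  also have "\<bar>\<dots>\<bar> \<le> norm ((B - B') $ i) * norm x + norm (B' $ i) * norm (x - x')"
    by (intro abs_triangle_ineq[THEN order_trans] add_mono Cauchy_Schwarz_ineq2)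
  also have "\<dots> \<le> norm (p - q) * norm p + norm q * norm (p - q)"
  proof (intro add_mono mult_mono)
    show "norm ((B - B') $ i) \<le> norm (p - q)"
      using order_trans[OF Finite_Cartesian_Product.norm_nth_le nfst[of "p - q"]] by (simp add: p q)
    show "norm x \<le> norm p" using nsnd[of p] by (simp add: p)
    show "norm (B' $ i) \<le> norm q" using order_trans[OF Finite_Cartesian_Product.norm_nth_le nfst[of q]] by (simp add: q)
    show "norm (x - x') \<le> norm (p - q)" using nsnd[of "p - q"] by (simp add: p q)
  qed auto
  finally show ?thesis by (simp add: p q algebra_simps)
qed

lemma mv_nth_bound:
  fixes p :: "(real^'d^'d) \<times> (real^'d)"
  shows "\<bar>(fst p *v snd p) $ i\<bar> \<le> norm p ^ 2"
proof -
  have "\<bar>(fst p *v snd p) $ i\<bar> \<le> norm (fst p) * norm (snd p)" by (rule mv_nth_le)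
  also have "\<dots> \<le> norm p * norm p" by (intro mult_mono nfst nsnd) auto
  finally show ?thesis by (simp add: power2_eq_square)
qed

lemma phi_bound: "\<bar>phi i j p\<bar> \<le> norm p ^ 4"
proof -
  have "\<bar>phi i j p\<bar> = \<bar>(fst p *v snd p) $ i\<bar> * \<bar>(fst p *v snd p) $ j\<bar>" by (simp add: phi_def abs_mult)
  also have "\<dots> \<le> norm p ^ 2 * norm p ^ 2" by (intro mult_mono mv_nth_bound) auto
  finally show ?thesis by (simp add: power_add[symmetric])
qed

lemma phi_lip: "\<bar>phi i j p - phi i j q\<bar> \<le> 2 * (1 + norm p ^ 3 + norm q ^ 3) * norm (p - q)"
proof -
  define a where "a = (fst p *v snd p) $ i"
  define b where "b = (fst p *v snd p) $ j"
  define a' where "a' = (fst q *v snd q) $ i"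
  define b' where "b' = (fst q *v snd q) $ j"
  define P where "P = norm p" define Q where "Q = norm q" define D where "D = norm (p - q)"
  have P0: "P \<ge> 0" and Q0: "Q \<ge> 0" and D0: "D \<ge> 0" by (auto simp: P_def Q_def D_def)
  have ha: "\<bar>a\<bar> \<le> P^2" using mv_nth_bound[where p=p and i=i] by (simp add: a_def P_def)
  have hb': "\<bar>b'\<bar> \<le> Q^2" using mv_nth_bound[where p=q and i=j] by (simp add: b'_def Q_def)
  have hab: "\<bar>a - a'\<bar> \<le> (P + Q) * D" using mv_nth_lip[where p=p and q=q and i=i] by (simp add: a_def a'_def P_def Q_def D_def)
  have hbb: "\<bar>b - b'\<bar> \<le> (P + Q) * D" using mv_nth_lip[where p=p and q=q and i=j] by (simp add: b_def b'_def P_def Q_def D_def)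
  have "phi i j p - phi i j q = a * (b - b') + b' * (a - a')"
    by (simp add: phi_def a_def b_def a'_def b'_def algebra_simps)
  hence "\<bar>phi i j p - phi i j q\<bar> \<le> \<bar>a\<bar> * \<bar>b - b'\<bar> + \<bar>b'\<bar> * \<bar>a - a'\<bar>"
    by (simp add: abs_mult[symmetric] abs_triangle_ineq)
  also have "\<dots> \<le> P^2 * ((P + Q) * D) + Q^2 * ((P + Q) * D)"
    by (intro add_mono mult_mono ha hb' hab hbb) auto
  also have "\<dots> = (P^2 + Q^2) * (P + Q) * D" by (simp add: algebra_simps)
  also have "\<dots> \<le> 2 * (1 + P^3 + Q^3) * D"
  proof (rule mult_right_mono[OF _ D0])
    have "P^2 * Q + P * Q^2 \<le> P^3 + Q^3"
    proof -
      have "0 \<le> (P + Q) * (P - Q)^2" using P0 Q0 by simp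
      thus ?thesis by (simp add: algebra_simps power2_eq_square power3_eq_cube)
    qed
    thus "(P^2 + Q^2) * (P + Q) \<le> 2 * (1 + P^3 + Q^3)"
      by (simp add: algebra_simps power2_eq_square power3_eq_cube)
  qed
  finally show ?thesis by (simp add: P_def Q_def D_def)
qed

lemma phi_lLip: "C_lLip (phi i j)"
  by (rule lLipI[of 2 _ 3, OF _ phi_lip]) simp

lemma gfun_lLip: "C_lLip (gfun i j)"
proof (rule lLipI[of 1 _ 1])
  fix B B'
  have "gfun i j B - gfun i j B' = (B - B') $ i \<bullet> B $ j + B' $ i \<bullet> (B - B') $ j"
    by (simp add: gfun_inner inner_diff_left inner_diff_right)
  also have "\<bar>\<dots>\<bar> \<le> norm ((B - B') $ i) * norm (B $ j) + norm (B' $ i) * norm ((B - B') $ j)"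
    by (intro abs_triangle_ineq[THEN order_trans] add_mono Cauchy_Schwarz_ineq2)
  also have "\<dots> \<le> norm (B - B') * norm B + norm B' * norm (B - B')"
    by (intro add_mono mult_mono Finite_Cartesian_Product.norm_nth_le) auto
  also have "\<dots> \<le> 1 * (1 + norm B ^ 1 + norm B' ^ 1) * norm (B - B')"
    by (simp add: algebra_simps)
  finally show "\<bar>gfun i j B - gfun i j B'\<bar> \<le> 1 * (1 + norm B ^ 1 + norm B' ^ 1) * norm (B - B')" .
qed simp

definition proj :: "real \<Rightarrow> 'a::euclidean_space \<Rightarrow> 'a" where
  "proj N p = closest_point (cball 0 N) p"

lemma proj_norm: "N \<ge> 0 \<Longrightarrow> norm (proj N p) \<le> N"
  unfolding proj_def using closest_point_in_set[of "cball (0::'a) N" p] by auto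

lemma proj_id: "norm p \<le> N \<Longrightarrow> proj N p = p"
  unfolding proj_def by (rule closest_point_self) simp

lemma proj_lip: "N \<ge> 0 \<Longrightarrow> norm (proj N p - proj N q) \<le> norm (p - q)"
  unfolding proj_def using closest_point_lipschitz[of "cball (0::'a) N" p q]
  by (simp add: dist_norm)

lemma phi_trunc_lip:
  assumes N: "N \<ge> 0"
  shows "\<bar>phi i j (proj N p) - phi i j (proj N q)\<bar> \<le> (2 * (1 + N^3 + N^3)) * norm (p - q)"
proof -
  have "\<bar>phi i j (proj N p) - phi i j (proj N q)\<bar> \<le> 2 * (1 + norm (proj N p) ^ 3 + norm (proj N q) ^ 3) * norm (proj N p - proj N q)"
    by (rule phi_lip)
  also have "\<dots> \<le> (2 * (1 + N^3 + N^3)) * norm (p - q)"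
  proof (rule mult_mono)
    show "2 * (1 + norm (proj N p) ^ 3 + norm (proj N q) ^ 3) \<le> 2 * (1 + N^3 + N^3)"
      using power_mono[OF proj_norm[OF N, of p], of 3] power_mono[OF proj_norm[OF N, of q], of 3] by simp
  qed (use proj_lip[OF N, of p q] N in auto)
  finally show ?thesis .
qed

lemma phi_trunc_bound: "N \<ge> 0 \<Longrightarrow> \<bar>phi i j (proj N p)\<bar> \<le> N^4"
proof -
  assume N: "N \<ge> 0"
  have "norm (proj N p) ^ 4 \<le> N^4" by (rule power_mono[OF proj_norm[OF N]]) simp
  thus ?thesis using phi_bound[of i j "proj N p"] by linarith
qed

lemma phi_trunc_bLip_s:
  assumes N: "N \<ge> 0"
  shows "C_bLip (\<lambda>p. s * phi i j (proj N p))"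
proof -
  have "\<bar>s * phi i j (proj N p)\<bar> \<le> \<bar>s\<bar> * N^4" for p
    unfolding abs_mult by (intro mult_left_mono phi_trunc_bound N) simp
  moreover have "\<bar>s * phi i j (proj N p) - s * phi i j (proj N q)\<bar> \<le> (\<bar>s\<bar> * (2 * (1 + N^3 + N^3))) * norm (p - q)" for p q
  proof -
    have "\<bar>s * phi i j (proj N p) - s * phi i j (proj N q)\<bar> = \<bar>s\<bar> * \<bar>phi i j (proj N p) - phi i j (proj N q)\<bar>"
      by (simp add: abs_mult[symmetric] right_diff_distrib)
    also have "\<dots> \<le> \<bar>s\<bar> * ((2 * (1 + N^3 + N^3)) * norm (p - q))"
      by (intro mult_left_mono phi_trunc_lip N) simp
    finally show ?thesis by (simp add: mult.assoc)
  qed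
  ultimately show ?thesis unfolding C_bLip_def by blast
qed

lemma phi_trunc_bLip:
  assumes N: "N \<ge> 0"
  shows "C_bLip (\<lambda>p. phi i j (proj N p))" "C_bLip (\<lambda>p. - phi i j (proj N p))"
proof -
  have bd: "\<bar>phi i j (proj N p)\<bar> \<le> N^4" for p
    using phi_bound[of i j "proj N p"] power_mono[OF proj_norm[OF N, of p], of 4] by simp
  have lp: "\<bar>phi i j (proj N p) - phi i j (proj N q)\<bar> \<le> (2 * (1 + N^3 + N^3)) * norm (p - q)" for p q
  proof -
    have "\<bar>phi i j (proj N p) - phi i j (proj N q)\<bar> \<le> 2 * (1 + norm (proj N p) ^ 3 + norm (proj N q) ^ 3) * norm (proj N p - proj N q)"
      by (rule phi_lip)
    also have "\<dots> \<le> (2 * (1 + N^3 + N^3)) * norm (p - q)"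
    proof (rule mult_mono)
      show "2 * (1 + norm (proj N p) ^ 3 + norm (proj N q) ^ 3) \<le> 2 * (1 + N^3 + N^3)"
        using power_mono[OF proj_norm[OF N, of p], of 3] power_mono[OF proj_norm[OF N, of q], of 3] by simp
    qed (use proj_lip[OF N, of p q] N in auto)
    finally show ?thesis .
  qed
  show "C_bLip (\<lambda>p. phi i j (proj N p))" unfolding C_bLip_def using bd lp by blast
  show "C_bLip (\<lambda>p. - phi i j (proj N p))" unfolding C_bLip_def using bd lp
    by (metis abs_minus_cancel abs_minus_commute minus_diff_minus)
qed

lemma phi_trunc_err:
  fixes p :: "(real^'d^'d) \<times> (real^'d)"
  assumes N: "N > 0"
  shows "\<bar>phi i j p - phi i j (proj N p)\<bar> \<le> 16 / N^2 * (norm (fst p) ^ 6 + norm (snd p) ^ 6)"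
proof (cases "norm p \<le> N")
  case True
  then show ?thesis using N by (simp add: proj_id)
next
  case False
  hence pN: "N < norm p" by simp
  have "\<bar>phi i j p - phi i j (proj N p)\<bar> \<le> norm p ^ 4 + N ^ 4"
    using phi_bound[of i j p] phi_bound[of i j "proj N p"] power_mono[OF proj_norm[of N p], of 4] N
    by (smt (verit) norm_ge_zero)
  also have "\<dots> \<le> 2 * norm p ^ 4" using power_mono[of N "norm p" 4] pN N by simp
  also have "\<dots> \<le> 2 * norm p ^ 6 / N^2"
  proof -
    have "N^2 \<le> norm p ^ 2" using power_mono[of N "norm p" 2] pN N by simp
    hence "norm p ^ 4 * N^2 \<le> norm p ^ 4 * norm p ^ 2" by (intro mult_left_mono) auto
    hence "2 * norm p ^ 4 * N^2 \<le> 2 * norm p ^ 6" by (simp add: power_add[symmetric])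
    thus ?thesis using N by (simp add: le_divide_eq)
  qed
  also have "norm p ^ 6 \<le> 8 * (norm (fst p) ^ 6 + norm (snd p) ^ 6)"
  proof -
    have "norm p ^ 2 = norm (fst p) ^ 2 + norm (snd p) ^ 2"
      by (cases p) (simp add: norm_Pair)
    hence "norm p ^ 6 = (norm (fst p) ^ 2 + norm (snd p) ^ 2) ^ 3"
      by (metis power_mult numeral_times_numeral semiring_norm(12) num_double)
    also have "\<dots> \<le> 2^3 * ((norm (fst p) ^ 2) ^ 3 + (norm (snd p) ^ 2) ^ 3)"
      by (rule pow_sum_le) auto
    finally show ?thesis by (simp add: power_mult[symmetric])
  qed
  hence "2 * norm p ^ 6 / N^2 \<le> 2 * (8 * (norm (fst p) ^ 6 + norm (snd p) ^ 6)) / N^2"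
    using N by (simp add: divide_right_mono)
  finally show ?thesis by simp
qed

lemma phi_gauss:
  fixes B :: "real^'d^'d" and i j :: 'd
  shows "(LINT x|lborel. phi i j (B, x) * Defs.std_normal_density x) = gfun i j B"
proof -
  define c where "c k l = B$i$k * B$j$l" for k l
  have eq: "phi i j (B, x) * Defs.std_normal_density x =
      (\<Sum>k\<in>UNIV. \<Sum>l\<in>UNIV. c k l * (x$k * x$l * Defs.std_normal_density x))" for x :: "real^'d"
  proof -
    have "phi i j (B, x) = (\<Sum>k\<in>UNIV. B$i$k * x$k) * (\<Sum>l\<in>UNIV. B$j$l * x$l)"
      by (simp add: phi_def matrix_vector_mult_def)
    also have "\<dots> = (\<Sum>k\<in>UNIV. \<Sum>l\<in>UNIV. c k l * (x$k * x$l))"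
      by (simp add: sum_product c_def mult_ac)
    finally show ?thesis by (simp add: sum_distrib_left sum_distrib_right mult_ac)
  qed
  have int: "integrable lborel (\<lambda>x::real^'d. c k l * (x$k * x$l * Defs.std_normal_density x))" for k l
    by (intro integrable_mult_right gauss_moment2(1))
  have "(LINT x|lborel. phi i j (B, x) * Defs.std_normal_density x) =
      (\<Sum>k\<in>UNIV. \<Sum>l\<in>UNIV. LINT x|lborel. c k l * (x$k * x$l * Defs.std_normal_density x))"
  proof -
    have "(LINT x|lborel. phi i j (B, x) * Defs.std_normal_density x) =
      (\<Sum>k\<in>UNIV. LINT x|lborel. (\<Sum>l\<in>UNIV. c k l * (x$k * x$l * Defs.std_normal_density x)))"
      unfolding eq by (rule Bochner_Integration.integral_sum) (rule Bochner_Integration.integrable_sum, rule int)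
    also have "\<dots> = (\<Sum>k\<in>UNIV. \<Sum>l\<in>UNIV. LINT x|lborel. c k l * (x$k * x$l * Defs.std_normal_density x))"
      by (intro sum.cong refl Bochner_Integration.integral_sum int)
    finally show ?thesis .
  qed
  also have "\<dots> = (\<Sum>k\<in>UNIV. \<Sum>l\<in>UNIV. c k l * (if k = l then 1 else 0))"
    by (simp add: gauss_moment2(2))
  also have "\<dots> = (\<Sum>k\<in>UNIV. c k k)"
    by (simp add: if_distrib cong: if_cong)
  also have "\<dots> = gfun i j B"
    by (simp add: gfun_inner inner_vec_def c_def)
  finally show ?thesis .
qed

lemma rv_pair:
  assumes "random_vector H X" "random_vector H Y"
  shows "random_vector H (\<lambda>w. (X w, Y w))"
  using assms unfolding random_vector_def by (auto simp: Basis_prod_def)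

lemma core:
  fixes H :: "('w \<Rightarrow> real) set" and E :: "('w \<Rightarrow> real) \<Rightarrow> real"
    and V :: "'w \<Rightarrow> real^'d^'d" and \<epsilon> :: "'w \<Rightarrow> real^'d"
  assumes SE: "sublinear_expectation H E"
    and Hclosed1: "lLip_closed H TYPE(real^'d^'d)"
    and Hclosed2: "lLip_closed H TYPE(real^'d)"
    and Hclosed3: "lLip_closed H TYPE((real^'d^'d) \<times> (real^'d))"
    and V_rv: "random_vector H V" and eps_rv: "random_vector H \<epsilon>"
    and eps_dist: "\<forall>\<phi>::real^'d \<Rightarrow> real. C_lLip \<phi> \<longrightarrow>
                   E (\<lambda>w. \<phi> (\<epsilon> w)) = (LINT x|lborel. \<phi> x * Defs.std_normal_density x)"
    and indep: "indep_seq E V \<epsilon>"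
  shows "E (\<lambda>w. s * phi i j (V w, \<epsilon> w)) = E (\<lambda>w. s * gfun i j (V w))"
proof -
  interpret SLE H E by unfold_locales (rule SE)
  have cl1: "(\<lambda>w. f (V w)) \<in> H" if "C_lLip f" for f :: "real^'d^'d \<Rightarrow> real"
    using Hclosed1 V_rv that unfolding lLip_closed_def by blast
  have cl2: "(\<lambda>w. f (\<epsilon> w)) \<in> H" if "C_lLip f" for f :: "real^'d \<Rightarrow> real"
    using Hclosed2 eps_rv that unfolding lLip_closed_def by blast
  have rvP: "random_vector H (\<lambda>w. (V w, \<epsilon> w))" by (rule rv_pair[OF V_rv eps_rv])
  have cl3: "(\<lambda>w. f (V w, \<epsilon> w)) \<in> H" if "C_lLip f" for f :: "(real^'d^'d) \<times> (real^'d) \<Rightarrow> real"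
    using Hclosed3 rvP that unfolding lLip_closed_def by blast
  define G where "G B = E (\<lambda>w. s * phi i j (B, \<epsilon> w))" for B
  define GN where "GN N B = E (\<lambda>w. s * phi i j (proj N (B, \<epsilon> w)))" for N B
  define v6 where "v6 = E (\<lambda>w. norm (V w) ^ 6)"
  define e6 where "e6 = E (\<lambda>w. norm (\<epsilon> w) ^ 6)"
  have V6: "(\<lambda>w. norm (V w) ^ 6) \<in> H" by (rule cl1[OF lLip_norm6])
  have e6H: "(\<lambda>w. norm (\<epsilon> w) ^ 6) \<in> H" by (rule cl2[OF lLip_norm6])
  have sphiL: "C_lLip (\<lambda>p. s * phi i j p)" by (rule lLip_scale[OF phi_lLip])
  have sgL: "C_lLip (\<lambda>B. s * gfun i j B)" by (rule lLip_scale[OF gfun_lLip])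
  have G_eq: "G B = s * gfun i j B" for B
  proof -
    have L: "C_lLip (\<lambda>x. s * phi i j (B, x))" using lLip_slice[OF sphiL] by simp
    have "G B = (LINT x|lborel. s * phi i j (B, x) * Defs.std_normal_density x)"
      unfolding G_def using eps_dist L by blast
    also have "\<dots> = s * (LINT x|lborel. phi i j (B, x) * Defs.std_normal_density x)"
      by (simp add: mult.assoc)
    finally show ?thesis by (simp add: phi_gauss)
  qed
  have err: "\<bar>s * phi i j p - s * phi i j (proj N p)\<bar> \<le> (16 * \<bar>s\<bar> / N^2) * (norm (fst p) ^ 6 + norm (snd p) ^ 6)"
    if N: "N > 0" for N p
  proof -
    have "\<bar>s * phi i j p - s * phi i j (proj N p)\<bar> = \<bar>s\<bar> * \<bar>phi i j p - phi i j (proj N p)\<bar>"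
      by (simp add: abs_mult[symmetric] right_diff_distrib)
    also have "\<dots> \<le> \<bar>s\<bar> * (16 / N^2 * (norm (fst p) ^ 6 + norm (snd p) ^ 6))"
      by (intro mult_left_mono phi_trunc_err N) simp
    also have "\<dots> = (16 * \<bar>s\<bar> / N^2) * (norm (fst p) ^ 6 + norm (snd p) ^ 6)"
      using N by (simp add: field_simps)
    finally show ?thesis .
  qed
  have bound: "\<bar>E (\<lambda>w. s * phi i j (V w, \<epsilon> w)) - E (\<lambda>w. s * gfun i j (V w))\<bar> \<le> (32 * \<bar>s\<bar> * (v6 + e6)) / N^2"
    if N: "N > 0" for N
  proof -
    define a where "a = 16 * \<bar>s\<bar> / N^2"
    have a0: "a \<ge> 0" by (simp add: a_def)
    have erra: "\<bar>s * phi i j p - s * phi i j (proj N p)\<bar> \<le> a * (norm (fst p) ^ 6 + norm (snd p) ^ 6)" for p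
      unfolding a_def by (rule err[OF N])
    have PsiH: "(\<lambda>w. s * phi i j (V w, \<epsilon> w)) \<in> H" using cl3[OF sphiL] by simp
    have bL: "C_bLip (\<lambda>p. s * phi i j (proj N p))" by (rule phi_trunc_bLip_s) (use N in simp)
    have PsiNH: "(\<lambda>w. s * phi i j (proj N (V w, \<epsilon> w))) \<in> H" using cl3[OF bLip_lLip[OF bL]] by simp
    have GVH: "(\<lambda>w. s * gfun i j (V w)) \<in> H" using cl1[OF sgL] by simp
    have I: "E (\<lambda>w. s * phi i j (proj N (V w, \<epsilon> w))) = E (\<lambda>w. GN N (V w))"
      using indep bL unfolding indep_seq_def GN_def by auto
    have A: "\<bar>E (\<lambda>w. s * phi i j (V w, \<epsilon> w)) - E (\<lambda>w. s * phi i j (proj N (V w, \<epsilon> w)))\<bar> \<le> a * (v6 + e6)"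
    proof -
      have "\<bar>E (\<lambda>w. s * phi i j (V w, \<epsilon> w)) - E (\<lambda>w. s * phi i j (proj N (V w, \<epsilon> w)))\<bar>
          \<le> E (\<lambda>w. \<bar>s * phi i j (V w, \<epsilon> w) - s * phi i j (proj N (V w, \<epsilon> w))\<bar>)"
        by (rule E_diff_abs[OF PsiH PsiNH])
      also have "\<dots> \<le> E (\<lambda>w. a * (norm (V w) ^ 6 + norm (\<epsilon> w) ^ 6))"
        by (rule E_mono) (use erra in \<open>auto intro!: H_abs H_diff PsiH PsiNH H_scale H_add V6 e6H\<close>)
      also have "\<dots> \<le> a * (v6 + e6)" unfolding v6_def e6_def by (rule E_lin2_le[OF V6 e6H a0])
      finally show ?thesis .
    qed
    have GNH: "(\<lambda>w. GN N (V w)) \<in> H"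
    proof (rule cl1, rule bLip_lLip)
      define L where "L = \<bar>s\<bar> * (2 * (1 + N^3 + N^3))"
      have L0: "L \<ge> 0" using N by (simp add: L_def)
      have sl: "C_bLip (\<lambda>x. s * phi i j (proj N (B, x)))" for B
      proof -
        obtain M where M: "\<And>p. \<bar>s * phi i j (proj N p)\<bar> \<le> M" using bL unfolding C_bLip_def by blast
        obtain L' where L': "\<And>p q. \<bar>s * phi i j (proj N p) - s * phi i j (proj N q)\<bar> \<le> L' * norm (p - q)"
          using bL unfolding C_bLip_def by blast
        have "\<bar>s * phi i j (proj N (B, x)) - s * phi i j (proj N (B, y))\<bar> \<le> L' * norm (x - y)" for x y
          using L'[of "(B, x)" "(B, y)"] by (simp add: norm_Pair)
        thus ?thesis unfolding C_bLip_def using M by blast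
      qed
      have slH: "(\<lambda>w. s * phi i j (proj N (B, \<epsilon> w))) \<in> H" for B
        using cl2[OF bLip_lLip[OF sl[of B]]] by simp
      have "\<bar>GN N B\<bar> \<le> \<bar>s\<bar> * N^4" for B
      proof -
        have pb: "\<bar>s * phi i j (proj N (B, x))\<bar> \<le> \<bar>s\<bar> * N^4" for x
          unfolding abs_mult by (intro mult_left_mono phi_trunc_bound) (use N in auto)
        have "GN N B \<le> E (\<lambda>_. \<bar>s\<bar> * N^4)" unfolding GN_def
          by (rule E_mono[OF slH H_const]) (use pb in \<open>auto simp: abs_le_iff\<close>)
        moreover have "E (\<lambda>_. - (\<bar>s\<bar> * N^4)) \<le> GN N B" unfolding GN_def
        proof (rule E_mono[OF H_const slH])
          fix w show "- (\<bar>s\<bar> * N^4) \<le> s * phi i j (proj N (B, \<epsilon> w))"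
            using pb[of "\<epsilon> w"] by linarith
        qed
        ultimately show ?thesis by (simp add: E_const abs_le_iff)
      qed
      moreover have "\<bar>GN N B - GN N B'\<bar> \<le> L * norm (B - B')" for B B'
      proof -
        have "\<bar>GN N B - GN N B'\<bar> \<le> E (\<lambda>w. \<bar>s * phi i j (proj N (B, \<epsilon> w)) - s * phi i j (proj N (B', \<epsilon> w))\<bar>)"
          unfolding GN_def by (rule E_diff_abs[OF slH slH])
        also have "\<dots> \<le> E (\<lambda>_. L * norm (B - B'))"
        proof (rule E_mono[OF H_abs[OF H_diff[OF slH slH]] H_const])
          fix w
          have "\<bar>s * phi i j (proj N (B, \<epsilon> w)) - s * phi i j (proj N (B', \<epsilon> w))\<bar>
              = \<bar>s\<bar> * \<bar>phi i j (proj N (B, \<epsilon> w)) - phi i j (proj N (B', \<epsilon> w))\<bar>"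
            by (simp add: abs_mult[symmetric] right_diff_distrib)
          also have "\<dots> \<le> \<bar>s\<bar> * ((2 * (1 + N^3 + N^3)) * norm ((B, \<epsilon> w) - (B', \<epsilon> w)))"
            by (intro mult_left_mono phi_trunc_lip) (use N in auto)
          also have "\<dots> = L * norm (B - B')" by (simp add: L_def norm_Pair)
          finally show "\<bar>s * phi i j (proj N (B, \<epsilon> w)) - s * phi i j (proj N (B', \<epsilon> w))\<bar> \<le> L * norm (B - B')" .
        qed
        finally show ?thesis by (simp add: E_const)
      qed
      ultimately show "C_bLip (GN N)" unfolding C_bLip_def by blast
    qed
    have Bst: "\<bar>E (\<lambda>w. GN N (V w)) - E (\<lambda>w. s * gfun i j (V w))\<bar> \<le> a * (v6 + e6)"
    proof -
      have pw: "\<bar>GN N B - s * gfun i j B\<bar> \<le> a * (e6 + norm B ^ 6)" for B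
      proof -
        have L: "C_lLip (\<lambda>x. s * phi i j (B, x))" using lLip_slice[OF sphiL] by simp
        have h1: "(\<lambda>w. s * phi i j (B, \<epsilon> w)) \<in> H" using cl2[OF L] by simp
        have sl: "C_lLip (\<lambda>x. s * phi i j (proj N (B, x)))"
          using lLip_slice[OF bLip_lLip[OF bL], of B] by simp
        have h2: "(\<lambda>w. s * phi i j (proj N (B, \<epsilon> w))) \<in> H" using cl2[OF sl] by simp
        have "\<bar>GN N B - s * gfun i j B\<bar> = \<bar>E (\<lambda>w. s * phi i j (B, \<epsilon> w)) - E (\<lambda>w. s * phi i j (proj N (B, \<epsilon> w)))\<bar>"
          using G_eq[of B] unfolding GN_def G_def by (simp add: abs_minus_commute)
        also have "\<dots> \<le> E (\<lambda>w. \<bar>s * phi i j (B, \<epsilon> w) - s * phi i j (proj N (B, \<epsilon> w))\<bar>)"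
          by (rule E_diff_abs[OF h1 h2])
        also have "\<dots> \<le> E (\<lambda>w. a * (norm B ^ 6 + norm (\<epsilon> w) ^ 6))"
          by (rule E_mono) (use erra in \<open>auto intro!: H_abs H_diff h1 h2 H_scale H_add H_const e6H\<close>)
        also have "\<dots> \<le> a * (norm B ^ 6 + e6)" unfolding e6_def by (rule E_lin_le[OF e6H a0])
        finally show ?thesis by (simp add: add.commute)
      qed
      have "\<bar>E (\<lambda>w. GN N (V w)) - E (\<lambda>w. s * gfun i j (V w))\<bar> \<le> E (\<lambda>w. \<bar>GN N (V w) - s * gfun i j (V w)\<bar>)"
        by (rule E_diff_abs[OF GNH GVH])
      also have "\<dots> \<le> E (\<lambda>w. a * (e6 + norm (V w) ^ 6))"
        by (rule E_mono) (use pw in \<open>auto intro!: H_abs H_diff GNH GVH H_scale H_add H_const V6\<close>)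
      also have "\<dots> \<le> a * (e6 + v6)" unfolding v6_def by (rule E_lin_le[OF V6 a0])
      finally show ?thesis by (simp add: add.commute)
    qed
    have "\<bar>E (\<lambda>w. s * phi i j (V w, \<epsilon> w)) - E (\<lambda>w. s * gfun i j (V w))\<bar> \<le> 2 * (a * (v6 + e6))"
      using A Bst I by linarith
    also have "\<dots> = (32 * \<bar>s\<bar> * (v6 + e6)) / N^2" by (simp add: a_def)
    finally show ?thesis .
  qed
  have "E (\<lambda>w. s * phi i j (V w, \<epsilon> w)) - E (\<lambda>w. s * gfun i j (V w)) = 0"
  proof (rule small_imp_zero)
    fix t :: real assume t: "t > 0"
    have "sqrt t > 0" using t by simp
    from bound[OF this] show "\<bar>E (\<lambda>w. s * phi i j (V w, \<epsilon> w)) - E (\<lambda>w. s * gfun i j (V w))\<bar> \<le> (32 * \<bar>s\<bar> * (v6 + e6)) / t"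
      using t by simp
  qed
  thus ?thesis by simp
qed

theorem mainTheorem7:
  fixes H :: "('w \<Rightarrow> real) set" and E :: "('w \<Rightarrow> real) \<Rightarrow> real"
    and \<Sigma> :: "(real^'d^'d) set"
    and V :: "'w \<Rightarrow> real^'d^'d" and \<epsilon> :: "'w \<Rightarrow> real^'d"
  assumes SE: "sublinear_expectation H E"
    and Hclosed1: "lLip_closed H TYPE(real^'d^'d)"
    and Hclosed2: "lLip_closed H TYPE(real^'d)"
    and Hclosed3: "lLip_closed H TYPE((real^'d^'d) \<times> (real^'d))"
    and Sigma_psd: "\<forall>A\<in>\<Sigma>. psd A"
    and Sigma_ne: "\<Sigma> \<noteq> {}"
    and Sigma_bdd: "bounded \<Sigma>" and Sigma_closed: "closed \<Sigma>" and Sigma_convex: "convex \<Sigma>"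
    and V_rv: "random_vector H V" and eps_rv: "random_vector H \<epsilon>"
    and V_dist: "\<forall>\<phi>::real^'d^'d \<Rightarrow> real. C_lLip \<phi> \<longrightarrow>
                   E (\<lambda>w. \<phi> (V w)) = (SUP B\<in>sqrt_set \<Sigma>. \<phi> B)"
    and eps_dist: "\<forall>\<phi>::real^'d \<Rightarrow> real. C_lLip \<phi> \<longrightarrow>
                   E (\<lambda>w. \<phi> (\<epsilon> w)) = (LINT x|lborel. \<phi> x * std_normal_density x)"
    and indep: "indep_seq E V \<epsilon>"
  shows "\<forall>i j. E (\<lambda>w. (V w *v \<epsilon> w) $ i * (V w *v \<epsilon> w) $ j) = (SUP A\<in>\<Sigma>. A $ i $ j)
            \<and> - E (\<lambda>w. - ((V w *v \<epsilon> w) $ i * (V w *v \<epsilon> w) $ j)) = (INF A\<in>\<Sigma>. A $ i $ j)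
            \<and> E (\<lambda>w. ((V w *v \<epsilon> w) $ i)\<^sup>2) = (SUP A\<in>\<Sigma>. A $ i $ i)
            \<and> - E (\<lambda>w. - (((V w *v \<epsilon> w) $ i)\<^sup>2)) = (INF A\<in>\<Sigma>. A $ i $ i)"
  proof -
  have core1: "E (\<lambda>w. s * phi i j (V w, \<epsilon> w)) = E (\<lambda>w. s * gfun i j (V w))" for s i j
    by (rule core[OF SE Hclosed1 Hclosed2 Hclosed3 V_rv eps_rv eps_dist indep])
  have Vd: "E (\<lambda>w. s * gfun i j (V w)) = (SUP B\<in>sqrt_set \<Sigma>. s * gfun i j B)" for s i j
    using V_dist lLip_scale[OF gfun_lLip, of s i j] by blast
  have img: "gfun i j ` sqrt_set \<Sigma> = (\<lambda>A. A $ i $ j) ` \<Sigma>" for i j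
  proof
    show "gfun i j ` sqrt_set \<Sigma> \<subseteq> (\<lambda>A. A $ i $ j) ` \<Sigma>"
    proof
      fix y assume "y \<in> gfun i j ` sqrt_set \<Sigma>"
      then obtain B where B: "psd B" "B ** B \<in> \<Sigma>" "y = gfun i j B" by (auto simp: sqrt_set_def)
      have "transpose B = B" using B(1) by (simp add: psd_def)
      hence "y = (B ** B) $ i $ j" using B(3) by (simp add: gfun_def)
      thus "y \<in> (\<lambda>A. A $ i $ j) ` \<Sigma>" using B(2) by blast
    qed
    show "(\<lambda>A. A $ i $ j) ` \<Sigma> \<subseteq> gfun i j ` sqrt_set \<Sigma>"
    proof
      fix y assume "y \<in> (\<lambda>A. A $ i $ j) ` \<Sigma>"
      then obtain A where A: "A \<in> \<Sigma>" "y = A $ i $ j" by blast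
      obtain B where B: "psd B" "B ** B = A" using psd_sqrt_exists Sigma_psd A(1) by blast
      have "transpose B = B" using B(1) by (simp add: psd_def)
      hence "gfun i j B = y" using B(2) A(2) by (simp add: gfun_def)
      moreover have "B \<in> sqrt_set \<Sigma>" using B A(1) by (simp add: sqrt_set_def)
      ultimately show "y \<in> gfun i j ` sqrt_set \<Sigma>" by blast
    qed
  qed
  have P1: "E (\<lambda>w. (V w *v \<epsilon> w) $ i * (V w *v \<epsilon> w) $ j) = (SUP A\<in>\<Sigma>. A $ i $ j)" for i j
  proof -
    have "E (\<lambda>w. (V w *v \<epsilon> w) $ i * (V w *v \<epsilon> w) $ j) = E (\<lambda>w. 1 * phi i j (V w, \<epsilon> w))"
      by (simp add: phi_def)
    also have "\<dots> = (SUP B\<in>sqrt_set \<Sigma>. 1 * gfun i j B)" by (simp only: core1 Vd)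
    also have "\<dots> = Sup (gfun i j ` sqrt_set \<Sigma>)" by simp
    also have "\<dots> = (SUP A\<in>\<Sigma>. A $ i $ j)" by (simp only: img)
    finally show ?thesis .
  qed
  have P2: "- E (\<lambda>w. - ((V w *v \<epsilon> w) $ i * (V w *v \<epsilon> w) $ j)) = (INF A\<in>\<Sigma>. A $ i $ j)" for i j
  proof -
    have "E (\<lambda>w. - ((V w *v \<epsilon> w) $ i * (V w *v \<epsilon> w) $ j)) = E (\<lambda>w. (-1) * phi i j (V w, \<epsilon> w))"
      by (simp add: phi_def)
    also have "\<dots> = (SUP B\<in>sqrt_set \<Sigma>. (-1) * gfun i j B)" by (simp only: core1 Vd)
    also have "\<dots> = Sup (uminus ` (gfun i j ` sqrt_set \<Sigma>))" by (simp add: image_image)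
    finally have "- E (\<lambda>w. - ((V w *v \<epsilon> w) $ i * (V w *v \<epsilon> w) $ j)) = Inf (gfun i j ` sqrt_set \<Sigma>)"
      by (simp add: Inf_real_def)
    also have "\<dots> = (INF A\<in>\<Sigma>. A $ i $ j)" by (simp only: img)
    finally show ?thesis .
  qed
  show ?thesis
  proof (intro allI conjI)
    fix i j
    show "E (\<lambda>w. (V w *v \<epsilon> w) $ i * (V w *v \<epsilon> w) $ j) = (SUP A\<in>\<Sigma>. A $ i $ j)" by (rule P1)
    show "- E (\<lambda>w. - ((V w *v \<epsilon> w) $ i * (V w *v \<epsilon> w) $ j)) = (INF A\<in>\<Sigma>. A $ i $ j)" by (rule P2)
    show "E (\<lambda>w. ((V w *v \<epsilon> w) $ i)\<^sup>2) = (SUP A\<in>\<Sigma>. A $ i $ i)"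
      using P1[of i i] by (simp add: power2_eq_square)
    show "- E (\<lambda>w. - (((V w *v \<epsilon> w) $ i)\<^sup>2)) = (INF A\<in>\<Sigma>. A $ i $ i)"
      using P2[of i i] by (simp add: power2_eq_square)
  qed
qed

end
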